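(* Let $k \ge 1$ be an integer. Let $P_1$ and $P_2$ be disjoint piles of coins, each of size $2^k$, and suppose exactly one coin of $P_1$ and exactly one coin of $P_2$ are counterfeit (all other coins genuine). Then there is an adaptive strategy using at most $k+1$ weighings on a 5-way scale (using only coins of $P_1 \cup P_2$) that determines both counterfeit coins.
   Context: Coins look identical; all genuine coins have one common weight, all counterfeit coins have one common weight strictly less than the genuine weight. A weighing places two disjoint sets of coins of equal cardinality on the left and right pans. Let $d$ = (number of counterfeit coins on the left pan) $-$ (number of counterfeit coins on the right pan). A 5-way scale reports MUCH LESS if $d \ge 2$, LESS if $d = 1$, EQUAL if $d = 0$, MORE if $d = -1$, MUCH MORE if $d \le -2$. A strategy chooses each weighing possibly depending on previous outcomes; it determines the counterfeit coins if the sequence of outcomes uniquely identifies them. *)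

theory Defs
  imports Main
begin

datatype outcome = MuchLess | Less | Equal | More | MuchMore

definition weigh :: "'a set \<Rightarrow> 'a set \<Rightarrow> 'a set \<Rightarrow> outcome" where
  "weigh C L R =
     (let d = int (card (L \<inter> C)) - int (card (R \<inter> C)) in
      if d \<ge> 2 then MuchLess
      else if d = 1 then Less
      else if d = 0 then Equal
      else if d = -1 then More
      else MuchMore)"

datatype 'a strat = Stop | Weigh "'a set" "'a set" "outcome \<Rightarrow> 'a strat"

primrec valid :: "'a set \<Rightarrow> 'a strat \<Rightarrow> nat \<Rightarrow> bool" where
  "valid U Stop = (\<lambda>n. True)"
| "valid U (Weigh L R f) =
     (\<lambda>n. 0 < n \<and> L \<subseteq> U \<and> R \<subseteq> U \<and> L \<inter> R = {} \<and> card L = card R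
          \<and> (\<forall>r. valid U (f r) (n - 1)))"

primrec outcomes :: "'a strat \<Rightarrow> 'a set \<Rightarrow> outcome list" where
  "outcomes Stop = (\<lambda>C. [])"
| "outcomes (Weigh L R f) = (\<lambda>C. weigh C L R # outcomes (f (weigh C L R)) C)"

end

theory Submission
  imports Defs
begin

definition sgnin :: "'a \<Rightarrow> 'a set \<Rightarrow> 'a set \<Rightarrow> int" where
  "sgnin x L R = (if x \<in> L then 1 else if x \<in> R then -1 else 0)"

definition outc :: "int \<Rightarrow> outcome" where
  "outc d = (if d \<ge> 2 then MuchLess
      else if d = 1 then Less
      else if d = 0 then Equal
      else if d = -1 then More
      else MuchMore)"

lemma card_pair_int:
  assumes "a \<noteq> b"
  shows "int (card (L \<inter> {a, b})) = (if a \<in> L then 1 else 0) + (if b \<in> L then 1 else 0)"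
  using assms
  by (cases "a \<in> L"; cases "b \<in> L") (auto simp: Int_insert_right)

lemma weigh_pair:
  assumes "a \<noteq> b" "L \<inter> R = {}"
  shows "weigh {a, b} L R = outc (sgnin a L R + sgnin b L R)"
proof -
  have "int (card (L \<inter> {a, b})) - int (card (R \<inter> {a, b})) = sgnin a L R + sgnin b L R"
    using assms unfolding card_pair_int[OF assms(1)] sgnin_def by auto
  then show ?thesis unfolding weigh_def outc_def Let_def by simp
qed

definition dist :: "'a strat \<Rightarrow> ('a \<times> 'a) set \<Rightarrow> bool" where
  "dist S X \<longleftrightarrow> (\<forall>p\<in>X. \<forall>q\<in>X. outcomes S {fst p, snd p} = outcomes S {fst q, snd q} \<longrightarrow> p = q)"

lemma dist_weigh:
  assumes "\<And>p. p \<in> X \<Longrightarrow> p \<in> Y (weigh {fst p, snd p} L R)"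
    and "\<And>r. dist (f r) (Y r)"
  shows "dist (Weigh L R f) X"
  unfolding dist_def
proof (intro ballI impI)
  fix p q assume p: "p \<in> X" and q: "q \<in> X"
    and eq: "outcomes (Weigh L R f) {fst p, snd p} = outcomes (Weigh L R f) {fst q, snd q}"
  let ?o = "weigh {fst p, snd p} L R"
  from eq have o: "weigh {fst q, snd q} L R = ?o" by simp
  from eq o have t: "outcomes (f ?o) {fst p, snd p} = outcomes (f ?o) {fst q, snd q}" by simp
  have "p \<in> Y ?o" using assms(1)[OF p] .
  moreover have "q \<in> Y ?o" using assms(1)[OF q] o by simp
  ultimately show "p = q" using assms(2)[of ?o] t unfolding dist_def by blast
qed

lemma split_half:
  assumes "finite A" "card A = 2 * m"
  shows "\<exists>A1 A2. A = A1 \<union> A2 \<and> A1 \<inter> A2 = {} \<and> card A1 = m \<and> card A2 = m"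
proof -
  have "m \<le> card A" using assms(2) by simp
  then obtain A1 where A1: "A1 \<subseteq> A" "card A1 = m"
    by (rule obtain_subset_with_card_n)
  have "card (A - A1) = m" using A1 assms by (simp add: card_Diff_subset finite_subset)
  moreover have "A = A1 \<union> (A - A1)" using A1(1) by blast
  moreover have "A1 \<inter> (A - A1) = {}" by blast
  ultimately show ?thesis using A1(2) by blast
qed

definition PR :: "'a set \<Rightarrow> 'a set \<Rightarrow> nat \<Rightarrow> bool" where
  "PR P1 P2 j \<longleftrightarrow> (\<forall>A B. A \<subseteq> P1 \<longrightarrow> B \<subseteq> P2 \<longrightarrow> card A = 2 ^ j \<longrightarrow> card B = 2 ^ j \<longrightarrow>
     (\<exists>S. valid (P1 \<union> P2) S (j + 1) \<and> dist S (A \<times> B)))"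

definition TW :: "'a set \<Rightarrow> 'a set \<Rightarrow> nat \<Rightarrow> bool" where
  "TW P1 P2 j \<longleftrightarrow> (\<forall>A1 B1 A2 B2. A1 \<subseteq> P1 \<longrightarrow> A2 \<subseteq> P1 \<longrightarrow> B1 \<subseteq> P2 \<longrightarrow> B2 \<subseteq> P2 \<longrightarrow>
     A1 \<inter> A2 = {} \<longrightarrow> B1 \<inter> B2 = {} \<longrightarrow>
     card A1 = 2 ^ j \<longrightarrow> card B1 = 2 ^ j \<longrightarrow> card A2 = 2 ^ j \<longrightarrow> card B2 = 2 ^ j \<longrightarrow>
     (\<exists>S. valid (P1 \<union> P2) S (j + 1) \<and> dist S (A1 \<times> B1 \<union> A2 \<times> B2)))"

lemma PR0: "PR P1 P2 0"
  unfolding PR_def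
proof (intro allI impI)
  fix A B :: "'a set" assume "card A = 2 ^ 0" "card B = 2 ^ 0"
  then obtain a b where "A = {a}" "B = {b}" by (auto simp: card_Suc_eq)
  then show "\<exists>S. valid (P1 \<union> P2) S (0 + 1) \<and> dist S (A \<times> B)"
    by (intro exI[of _ Stop]) (auto simp: dist_def)
qed

lemma TW0:
  assumes D: "P1 \<inter> P2 = {}"
  shows "TW P1 P2 0"
  unfolding TW_def
proof (intro allI impI)
  fix A1 B1 A2 B2 :: "'a set"
  assume h: "A1 \<subseteq> P1" "A2 \<subseteq> P1" "B1 \<subseteq> P2" "B2 \<subseteq> P2" "A1 \<inter> A2 = {}" "B1 \<inter> B2 = {}"
    "card A1 = 2 ^ 0" "card B1 = 2 ^ 0" "card A2 = 2 ^ 0" "card B2 = 2 ^ 0"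
  then obtain a1 b1 a2 b2 where e: "A1 = {a1}" "B1 = {b1}" "A2 = {a2}" "B2 = {b2}"
    by (auto simp: card_Suc_eq)
  have m: "a1 \<in> P1" "a2 \<in> P1" "b1 \<in> P2" "b2 \<in> P2" "a1 \<noteq> a2" "b1 \<noteq> b2" using h e by auto
  have m2: "a1 \<noteq> b1" "a2 \<noteq> b2" "b1 \<noteq> a2" "b2 \<noteq> a1" "{a1} \<inter> {a2} = {}" using m D by auto
  have w1: "weigh {a1, b1} {a1} {a2} = Less"
    using m2 by (simp add: weigh_pair sgnin_def outc_def)
  have w2: "weigh {a2, b2} {a1} {a2} = More"
    using m2 by (simp add: weigh_pair sgnin_def outc_def)
  let ?S = "Weigh {a1} {a2} (\<lambda>_. Stop)"
  have v: "valid (P1 \<union> P2) ?S (0 + 1)" using m by auto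
  have d: "dist ?S (A1 \<times> B1 \<union> A2 \<times> B2)"
  proof (rule dist_weigh[where Y = "\<lambda>r. if r = Less then {(a1, b1)} else {(a2, b2)}"])
    fix p assume "p \<in> A1 \<times> B1 \<union> A2 \<times> B2"
    then have "p = (a1, b1) \<or> p = (a2, b2)" using e by auto
    then show "p \<in> (if weigh {fst p, snd p} {a1} {a2} = Less then {(a1, b1)} else {(a2, b2)})"
      using w1 w2 by auto
  next
    fix r show "dist Stop (if r = Less then {(a1, b1)} else {(a2, b2)})" by (auto simp: dist_def)
  qed
  show "\<exists>S. valid (P1 \<union> P2) S (0 + 1) \<and> dist S (A1 \<times> B1 \<union> A2 \<times> B2)"
    using v d by blast
qed


lemma sgnin_L: "x \<in> L \<Longrightarrow> sgnin x L R = 1" by (simp add: sgnin_def)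
lemma sgnin_R: "x \<notin> L \<Longrightarrow> x \<in> R \<Longrightarrow> sgnin x L R = -1" by (simp add: sgnin_def)
lemma sgnin_N: "x \<notin> L \<Longrightarrow> x \<notin> R \<Longrightarrow> sgnin x L R = 0" by (simp add: sgnin_def)

lemma halves:
  assumes "finite P" "A \<subseteq> P" "card A = 2 ^ Suc j"
  obtains A1 A2 where "A = A1 \<union> A2" "A1 \<inter> A2 = {}" "card A1 = 2 ^ j" "card A2 = 2 ^ j"
    "A1 \<subseteq> P" "A2 \<subseteq> P"
proof -
  have "finite A" using assms finite_subset by blast
  then obtain A1 A2 where "A = A1 \<union> A2" "A1 \<inter> A2 = {}" "card A1 = 2 ^ j" "card A2 = 2 ^ j"
    using split_half[of A "2 ^ j"] assms(3) by auto
  then show ?thesis using that assms(2) by blast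
qed

lemma PR_step:
  assumes D: "P1 \<inter> P2 = {}" and F: "finite P1" "finite P2"
    and IH: "PR P1 P2 j" "TW P1 P2 j"
  shows "PR P1 P2 (Suc j)"
  unfolding PR_def
proof (intro allI impI)
  fix A B assume AB: "A \<subseteq> P1" "B \<subseteq> P2" "card A = 2 ^ Suc j" "card B = 2 ^ Suc j"
  obtain A1 A2 where A: "A = A1 \<union> A2" "A1 \<inter> A2 = {}" "card A1 = 2 ^ j" "card A2 = 2 ^ j"
    "A1 \<subseteq> P1" "A2 \<subseteq> P1" using halves[OF F(1) AB(1) AB(3)] by blast
  obtain B1 B2 where B: "B = B1 \<union> B2" "B1 \<inter> B2 = {}" "card B1 = 2 ^ j" "card B2 = 2 ^ j"
    "B1 \<subseteq> P2" "B2 \<subseteq> P2" using halves[OF F(2) AB(2) AB(4)] by blast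
  obtain S1 where S1: "valid (P1 \<union> P2) S1 (j + 1)" "dist S1 (A1 \<times> B1)"
    using IH(1) A(3,5) B(3,5) unfolding PR_def by blast
  obtain S2 where S2: "valid (P1 \<union> P2) S2 (j + 1)" "dist S2 (A2 \<times> B2)"
    using IH(1) A(4,6) B(4,6) unfolding PR_def by blast
  obtain S3 where S3: "valid (P1 \<union> P2) S3 (j + 1)" "dist S3 (A1 \<times> B2 \<union> A2 \<times> B1)"
    using IH(2) A(2,3,4,5,6) B(2,3,4,5,6) unfolding TW_def by (metis Int_commute)
  define L where "L = A1 \<union> B1"
  define R where "R = A2 \<union> B2"
  define f where "f = case_outcome S1 Stop S3 Stop S2"
  define Y where "Y = case_outcome (A1 \<times> B1) {} (A1 \<times> B2 \<union> A2 \<times> B1) {} (A2 \<times> B2)"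
  have fin: "finite A1" "finite A2" "finite B1" "finite B2"
    using A(5,6) B(5,6) F finite_subset by blast+
  have LR: "L \<inter> R = {}" unfolding L_def R_def using A(2,5,6) B(2,5,6) D by blast
  have cL: "card L = 2 ^ j + 2 ^ j" unfolding L_def
    using card_Un_disjoint[of A1 B1] fin A(3,5) B(3,5) D by auto
  have cR: "card R = 2 ^ j + 2 ^ j" unfolding R_def
    using card_Un_disjoint[of A2 B2] fin A(4,6) B(4,6) D by auto
  have v: "valid (P1 \<union> P2) (Weigh L R f) (Suc j + 1)"
  proof -
    have "\<forall>r. valid (P1 \<union> P2) (f r) (Suc j + 1 - 1)"
    proof
      fix r show "valid (P1 \<union> P2) (f r) (Suc j + 1 - 1)"
        using S1 S2 S3 unfolding f_def by (cases r) simp_all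
    qed
    moreover have "L \<subseteq> P1 \<union> P2" "R \<subseteq> P1 \<union> P2" unfolding L_def R_def using A(5,6) B(5,6) by blast+
    ultimately show ?thesis using LR cL cR by simp
  qed
  have d: "dist (Weigh L R f) (A \<times> B)"
  proof (rule dist_weigh[where Y = Y])
    fix p assume "p \<in> A \<times> B"
    then obtain a b where p: "p = (a, b)" "a \<in> A" "b \<in> B" by blast
    have aP: "a \<in> P1" and bP: "b \<in> P2" using p AB by blast+
    have ab: "a \<noteq> b" using aP bP D by blast
    have aA: "a \<in> A1 \<or> a \<in> A2" using p(2) A(1) by blast
    have bB: "b \<in> B1 \<or> b \<in> B2" using p(3) B(1) by blast
    have aB: "a \<notin> B1" "a \<notin> B2" using aP D B(5,6) by blast+
    have bA: "b \<notin> A1" "b \<notin> A2" using bP D A(5,6) by blast+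
    have sa: "sgnin a L R = (if a \<in> A1 then 1 else -1)"
    proof (cases "a \<in> A1")
      case True then show ?thesis by (simp add: L_def sgnin_L)
    next
      case False
      then have "a \<notin> L" "a \<in> R" using aA aB unfolding L_def R_def by blast+
      then show ?thesis using False by (simp add: sgnin_R)
    qed
    have sb: "sgnin b L R = (if b \<in> B1 then 1 else -1)"
    proof (cases "b \<in> B1")
      case True then show ?thesis by (simp add: L_def sgnin_L)
    next
      case False
      then have "b \<notin> L" "b \<in> R" using bB bA unfolding L_def R_def by blast+
      then show ?thesis using False by (simp add: sgnin_R)
    qed
    have w: "weigh {fst p, snd p} L R = outc (sgnin a L R + sgnin b L R)"
      using weigh_pair[OF ab LR] p by simp
    have a2: "a \<in> A2 \<Longrightarrow> a \<notin> A1" and b2: "b \<in> B2 \<Longrightarrow> b \<notin> B1" using A(2) B(2) by blast+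
    have "(a, b) \<in> Y (outc ((if a \<in> A1 then 1 else - 1) + (if b \<in> B1 then 1 else - 1)))"
      using aA bB
    proof (elim disjE)
      assume "a \<in> A1" "b \<in> B1" then show ?thesis by (simp add: Y_def outc_def)
    next
      assume "a \<in> A1" "b \<in> B2" then show ?thesis using b2 by (simp add: Y_def outc_def)
    next
      assume "a \<in> A2" "b \<in> B1" then show ?thesis using a2 by (simp add: Y_def outc_def)
    next
      assume "a \<in> A2" "b \<in> B2" then show ?thesis using a2 b2 by (simp add: Y_def outc_def)
    qed
    then show "p \<in> Y (weigh {fst p, snd p} L R)" using w sa sb p(1) by simp
  next
    fix r show "dist (f r) (Y r)"
      using S1 S2 S3 unfolding f_def Y_def by (cases r) (simp_all add: dist_def)
  qed
  show "\<exists>S. valid (P1 \<union> P2) S (Suc j + 1) \<and> dist S (A \<times> B)" using v d by blast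
qed


lemma TW_step:
  assumes D: "P1 \<inter> P2 = {}" and F: "finite P1" "finite P2"
    and IH: "PR P1 P2 j" "TW P1 P2 j"
  shows "TW P1 P2 (Suc j)"
  unfolding TW_def
proof (intro allI impI)
  fix A1 B1 A2 B2 :: "'a set"
  assume H: "A1 \<subseteq> P1" "A2 \<subseteq> P1" "B1 \<subseteq> P2" "B2 \<subseteq> P2" "A1 \<inter> A2 = {}" "B1 \<inter> B2 = {}"
    "card A1 = 2 ^ Suc j" "card B1 = 2 ^ Suc j" "card A2 = 2 ^ Suc j" "card B2 = 2 ^ Suc j"
  obtain A11 A12 where a1: "A1 = A11 \<union> A12" "A11 \<inter> A12 = {}" "card A11 = 2 ^ j" "card A12 = 2 ^ j"
    "A11 \<subseteq> P1" "A12 \<subseteq> P1" using halves[OF F(1) H(1) H(7)] by blast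
  obtain A21 A22 where a2: "A2 = A21 \<union> A22" "A21 \<inter> A22 = {}" "card A21 = 2 ^ j" "card A22 = 2 ^ j"
    "A21 \<subseteq> P1" "A22 \<subseteq> P1" using halves[OF F(1) H(2) H(9)] by blast
  obtain B11 B12 where b1: "B1 = B11 \<union> B12" "B11 \<inter> B12 = {}" "card B11 = 2 ^ j" "card B12 = 2 ^ j"
    "B11 \<subseteq> P2" "B12 \<subseteq> P2" using halves[OF F(2) H(3) H(8)] by blast
  obtain B21 B22 where b2: "B2 = B21 \<union> B22" "B21 \<inter> B22 = {}" "card B21 = 2 ^ j" "card B22 = 2 ^ j"
    "B21 \<subseteq> P2" "B22 \<subseteq> P2" using halves[OF F(2) H(4) H(10)] by blast
  have dA: "A11 \<inter> A21 = {}" "A11 \<inter> A22 = {}" "A12 \<inter> A21 = {}" "A12 \<inter> A22 = {}"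
    using H(5) a1(1) a2(1) by blast+
  have dB: "B11 \<inter> B21 = {}" "B11 \<inter> B22 = {}" "B12 \<inter> B21 = {}" "B12 \<inter> B22 = {}"
    using H(6) b1(1) b2(1) by blast+
  note TWr = IH(2)[unfolded TW_def, rule_format]
  note PRr = IH(1)[unfolded PR_def, rule_format]
  obtain S1 where S1: "valid (P1 \<union> P2) S1 (j + 1)" "dist S1 (A11 \<times> B11)"
    using PRr[OF a1(5) b1(5) a1(3) b1(3)] by blast
  obtain S5 where S5: "valid (P1 \<union> P2) S5 (j + 1)" "dist S5 (A22 \<times> B22)"
    using PRr[OF a2(6) b2(6) a2(4) b2(4)] by blast
  obtain S2 where S2: "valid (P1 \<union> P2) S2 (j + 1)" "dist S2 (A11 \<times> B12 \<union> A21 \<times> B21)"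
    using TWr[OF a1(5) a2(5) b1(6) b2(5) dA(1) dB(3) a1(3) b1(4) a2(3) b2(3)] by blast
  obtain S3 where S3: "valid (P1 \<union> P2) S3 (j + 1)" "dist S3 (A12 \<times> B11 \<union> A21 \<times> B22)"
    using TWr[OF a1(6) a2(5) b1(5) b2(6) dA(3) dB(2) a1(4) b1(3) a2(3) b2(4)] by blast
  obtain S4 where S4: "valid (P1 \<union> P2) S4 (j + 1)" "dist S4 (A12 \<times> B12 \<union> A22 \<times> B21)"
    using TWr[OF a1(6) a2(6) b1(6) b2(5) dA(4) dB(3) a1(4) b1(4) a2(4) b2(3)] by blast
  define L where "L = A11 \<union> B11 \<union> A21"
  define R where "R = A12 \<union> A22 \<union> B22"
  define f where "f = case_outcome S1 S2 S3 S4 S5"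
  define Y where "Y = case_outcome (A11 \<times> B11) (A11 \<times> B12 \<union> A21 \<times> B21)
     (A12 \<times> B11 \<union> A21 \<times> B22) (A12 \<times> B12 \<union> A22 \<times> B21) (A22 \<times> B22)"
  have fin: "finite A11" "finite A12" "finite A21" "finite A22"
     "finite B11" "finite B12" "finite B21" "finite B22"
    using a1(5,6) a2(5,6) b1(5,6) b2(5,6) F finite_subset by blast+
  have x1: "A11 \<inter> B11 = {}" "A12 \<inter> A22 = {}" "A21 \<inter> B11 = {}" "A12 \<inter> B22 = {}" "A22 \<inter> B22 = {}"
    using a1(5,6) a2(5,6) b1(5,6) b2(5,6) D dA by blast+
  have PQ: "\<And>X Y. X \<subseteq> P1 \<Longrightarrow> Y \<subseteq> P2 \<Longrightarrow> X \<inter> Y = {}" using D by blast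
  have PQ2: "\<And>X Y. X \<subseteq> P1 \<Longrightarrow> Y \<subseteq> P2 \<Longrightarrow> Y \<inter> X = {}" using D by blast
  have LR: "L \<inter> R = {}" unfolding L_def R_def Int_Un_distrib Int_Un_distrib2 Un_empty
    using a1(2) a2(2) dA(2,3) dB(2) PQ[OF a1(5) b2(6)] PQ2[OF a1(6) b1(5)] PQ2[OF a2(6) b1(5)]
      PQ[OF a2(5) b2(6)] by (simp add: Int_commute)
  have cL: "card L = 2 ^ j + 2 ^ j + 2 ^ j" unfolding L_def
  proof -
    have "card (A11 \<union> B11) = 2 ^ j + 2 ^ j" using card_Un_disjoint[of A11 B11] fin x1 a1(3) b1(3) by simp
    moreover have "(A11 \<union> B11) \<inter> A21 = {}" using dA(1) x1(3) by blast
    ultimately show "card (A11 \<union> B11 \<union> A21) = 2 ^ j + 2 ^ j + 2 ^ j"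
      using card_Un_disjoint[of "A11 \<union> B11" A21] fin a2(3) by simp
  qed
  have cR: "card R = 2 ^ j + 2 ^ j + 2 ^ j" unfolding R_def
  proof -
    have "card (A12 \<union> A22) = 2 ^ j + 2 ^ j" using card_Un_disjoint[of A12 A22] fin x1 a1(4) a2(4) by simp
    moreover have "(A12 \<union> A22) \<inter> B22 = {}" using x1 by blast
    ultimately show "card (A12 \<union> A22 \<union> B22) = 2 ^ j + 2 ^ j + 2 ^ j"
      using card_Un_disjoint[of "A12 \<union> A22" B22] fin b2(4) by simp
  qed
  have v: "valid (P1 \<union> P2) (Weigh L R f) (Suc j + 1)"
  proof -
    have "\<forall>r. valid (P1 \<union> P2) (f r) (Suc j + 1 - 1)"
    proof
      fix r show "valid (P1 \<union> P2) (f r) (Suc j + 1 - 1)"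
        using S1 S2 S3 S4 S5 unfolding f_def by (cases r) simp_all
    qed
    moreover have "L \<subseteq> P1 \<union> P2" "R \<subseteq> P1 \<union> P2" unfolding L_def R_def
      using a1(5,6) a2(5,6) b1(5,6) b2(5,6) by blast+
    ultimately show ?thesis using LR cL cR by simp
  qed
  have d: "dist (Weigh L R f) (A1 \<times> B1 \<union> A2 \<times> B2)"
  proof (rule dist_weigh[where Y = Y])
    fix p assume "p \<in> A1 \<times> B1 \<union> A2 \<times> B2"
    then obtain a b where p: "p = (a, b)" "(a \<in> A1 \<and> b \<in> B1) \<or> (a \<in> A2 \<and> b \<in> B2)" by blast
    have aP: "a \<in> P1" and bP: "b \<in> P2" using p(2) H(1-4) by blast+
    have ab: "a \<noteq> b" using aP bP D by blast
    have aB: "a \<notin> B11" "a \<notin> B22" using aP D b1(5) b2(6) by blast+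
    have bA: "b \<notin> A11" "b \<notin> A21" "b \<notin> A12" "b \<notin> A22" using bP D a1(5,6) a2(5,6) by blast+
    have w: "weigh {fst p, snd p} L R = outc (sgnin a L R + sgnin b L R)"
      using weigh_pair[OF ab LR] p by simp
    have "(a, b) \<in> Y (outc (sgnin a L R + sgnin b L R))"
      using p(2)
    proof (elim disjE conjE)
      assume a: "a \<in> A1" and b: "b \<in> B1"
      have sb: "sgnin b L R = (if b \<in> B11 then 1 else 0)"
      proof (cases "b \<in> B11")
        case True then show ?thesis by (simp add: L_def sgnin_L)
      next
        case False
        then have "b \<in> B12" using b b1(1) by blast
        then have "b \<notin> B22" using dB(4) by blast
        then have "b \<notin> L" "b \<notin> R" using False bA unfolding L_def R_def by blast+
        then show ?thesis using False by (simp add: sgnin_N)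
      qed
      have sa: "sgnin a L R = (if a \<in> A11 then 1 else -1)"
      proof (cases "a \<in> A11")
        case True then show ?thesis by (simp add: L_def sgnin_L)
      next
        case False
        then have "a \<in> A12" using a a1(1) by blast
        then have "a \<notin> A21" using dA(3) by blast
        then have "a \<notin> L" "a \<in> R" using False aB \<open>a \<in> A12\<close> unfolding L_def R_def by blast+
        then show ?thesis using False by (simp add: sgnin_R)
      qed
      have e1: "a \<in> A12 \<Longrightarrow> a \<notin> A11" "b \<in> B12 \<Longrightarrow> b \<notin> B11" using a1(2) b1(2) by blast+
      have "a \<in> A11 \<or> a \<in> A12" "b \<in> B11 \<or> b \<in> B12" using a b a1(1) b1(1) by blast+
      then show ?thesis unfolding sa sb using e1 by (auto simp: Y_def outc_def)
    next
      assume a: "a \<in> A2" and b: "b \<in> B2"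
      have sb: "sgnin b L R = (if b \<in> B21 then 0 else -1)"
      proof (cases "b \<in> B21")
        case True
        then have "b \<notin> B11" "b \<notin> B22" using dB(1) b2(2) by blast+
        then have "b \<notin> L" "b \<notin> R" using bA unfolding L_def R_def by blast+
        then show ?thesis using True by (simp add: sgnin_N)
      next
        case False
        then have "b \<in> B22" using b b2(1) by blast
        moreover have "b \<notin> B11" using b H(6) b1(1) by blast
        ultimately have "b \<notin> L" "b \<in> R" using bA unfolding L_def R_def by blast+
        then show ?thesis using False by (simp add: sgnin_R)
      qed
      have sa: "sgnin a L R = (if a \<in> A21 then 1 else -1)"
      proof (cases "a \<in> A21")
        case True then show ?thesis by (simp add: L_def sgnin_L)
      next
        case False
        then have "a \<in> A22" using a a2(1) by blast
        moreover have "a \<notin> A11" using a H(5) a1(1) by blast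
        ultimately have "a \<notin> L" "a \<in> R" using False aB unfolding L_def R_def by blast+
        then show ?thesis using False by (simp add: sgnin_R)
      qed
      have e1: "a \<in> A22 \<Longrightarrow> a \<notin> A21" "b \<in> B22 \<Longrightarrow> b \<notin> B21" using a2(2) b2(2) by blast+
      have "a \<in> A21 \<or> a \<in> A22" "b \<in> B21 \<or> b \<in> B22" using a b a2(1) b2(1) by blast+
      then show ?thesis unfolding sa sb using e1 by (auto simp: Y_def outc_def)
    qed
    then show "p \<in> Y (weigh {fst p, snd p} L R)" using w p(1) by simp
  next
    fix r show "dist (f r) (Y r)"
      using S1 S2 S3 S4 S5 unfolding f_def Y_def by (cases r) simp_all
  qed
  show "\<exists>S. valid (P1 \<union> P2) S (Suc j + 1) \<and> dist S (A1 \<times> B1 \<union> A2 \<times> B2)" using v d by blast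
qed

lemma PR_all:
  assumes D: "P1 \<inter> P2 = {}" and F: "finite P1" "finite P2"
  shows "PR P1 P2 j \<and> TW P1 P2 j"
proof (induction j)
  case 0 then show ?case using PR0 TW0[OF D] by blast
next
  case (Suc j) then show ?case using PR_step[OF D F] TW_step[OF D F] by blast
qed

theorem mainTheorem5:
  fixes k :: nat and P1 P2 :: "'a set"
  assumes "k \<ge> 1"
    and "P1 \<inter> P2 = {}"
    and "finite P1" and "finite P2"
    and "card P1 = 2 ^ k" and "card P2 = 2 ^ k"
  shows "\<exists>S. valid (P1 \<union> P2) S (k + 1) \<and>
    (\<forall>a\<in>P1. \<forall>b\<in>P2. \<forall>a'\<in>P1. \<forall>b'\<in>P2.
       outcomes S {a, b} = outcomes S {a', b'} \<longrightarrow> {a, b} = {a', b'})"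
proof -
  have "PR P1 P2 k" using PR_all[OF assms(2,3,4)] by blast
  then obtain S where S: "valid (P1 \<union> P2) S (k + 1)" "dist S (P1 \<times> P2)"
    using assms(5,6) unfolding PR_def by blast
  have "\<forall>a\<in>P1. \<forall>b\<in>P2. \<forall>a'\<in>P1. \<forall>b'\<in>P2.
       outcomes S {a, b} = outcomes S {a', b'} \<longrightarrow> {a, b} = {a', b'}"
  proof (intro ballI impI)
    fix a b a' b' assume "a \<in> P1" "b \<in> P2" "a' \<in> P1" "b' \<in> P2"
      "outcomes S {a, b} = outcomes S {a', b'}"
    then have "(a, b) = (a', b')" using S(2) unfolding dist_def by fastforce
    then show "{a, b} = {a', b'}" by simp
  qed
  then show ?thesis using S(1) by blast
qed

end
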